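(* Let $\kappa$ be a fixed grounding calculus and let $\delta$ be a grounding derivation of a formula $A$ in $\kappa$. Let $\Gamma$ be the list of all grounds and $\Delta$ the list of all conditions occurring in a bar of $\delta$. Then the mediate grounding claim $\Gamma[\Delta]\gg A$ is derivable in any calculus that contains the rules of $\kappa$, the rules for the immediate grounding operator $\blacktriangleright$, and the rules for the mediate grounding operator $\gg$.
   Context: A grounding calculus $\kappa$ is a natural-deduction system whose grounding rules have the form: from premisses $A_1,\dots,A_n$ (the ground) and a possibly empty list of premisses $[C_1,\dots,C_m]$ (the conditions) infer $B$; an application expresses that $A_1,\dots,A_n$ form a ground of $B$ under the conditions $C_1,\dots,C_m$. In a derivation, a formula occurrence that is a premiss of a grounding rule application in a condition position is a condition, otherwise a ground. The language contains propositional variables, $\bot,\neg,\wedge,\vee,\to$, and grounding formulae $\Gamma[\Delta]\blacktriangleright A$ and $\Gamma[\Delta]\gg A$ with $\Gamma,\Delta$ finite lists of formulae ($\Delta$ possibly empty, in which case one writes $\Gamma\blacktriangleright A$, $\Gamma\gg A$). Rules for $\blacktriangleright$: Introduction: if an application of a grounding rule of $\kappa$ with premisses $A_1,\dots,A_n,[C_1,\dots,C_m]$ and conclusion $B$ occurs (with arbitrary derivations of its premisses), one may infer $A_1,\dots,A_n[C_1,\dots,C_m]\blacktriangleright B$ immediately below it. Eliminations: from $\Gamma[\Delta]\blacktriangleright B$ infer $B$, any element of $\Gamma$, any element of $\Delta$; and from $A_1,\dots,A_n[C_1,\dots,C_m]\blacktriangleright B$ infer $\bot$ whenever there is no grounding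 rule application with premisses $A_1,\dots,A_n,[C_1,\dots,C_m]$ and conclusion $B$. Rules for $\gg$: Introductions: from $\Gamma[\Delta]\blacktriangleright A$ infer $\Gamma[\Delta]\gg A$; from $\Gamma[\Delta]\gg A$ and $\Gamma_1,A,\Gamma_2[\Delta_1]\gg B$ infer $\Gamma_1,\Gamma,\Gamma_2[\Delta,\Delta_1]\gg B$; from $\Gamma[\Delta]\gg A$ and $\Gamma_1[\Delta_1,A,\Delta_2]\gg B$ infer $\Gamma_1[\Delta_1,\Gamma,\Delta,\Delta_2]\gg B$. Eliminations: from $\Gamma[\Delta]\gg B$ infer $B$, any element of $\Gamma$, and any element of $\Delta$. A grounding derivation is a derivation constructed by exclusively applying grounding rules of $\kappa$ to a set of consistent hypotheses and containing at least one rule application. For a derivation $\delta$ (each step having one or more premisses and one conclusion), its derivation-tree $t(\delta)$ is the tree whose nodes correspond one-to-one to the formula occurrences of $\delta$, with the root corresponding to the conclusion and the children of a node corresponding one-to-one to the premisses of the step whose conclusion is that node. A bar of $\delta$ is a set of formula occurrences of $\delta$ not containing the conclusion of $\delta$ and whose corresponding nodes share exactly one element with each path from the root of $t(\delta)$ to one of its leaves. *)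

theory Defs
  imports Main
begin

text \<open>Formulae: propositional variables, falsum, the connectives, and the grounding
formulae GImm G D A (immediate grounding, G[D] |> A) and GMed G D A
(mediate grounding, G[D] >> A).\<close>

datatype form =
    PVar nat
  | Bot
  | Neg form
  | Conj form form
  | Disj form form
  | Imp form form
  | GImm "form list" "form list" form
  | GMed "form list" "form list" form

text \<open>A grounding calculus kappa is represented by the set of all its rule applications:
a triple (grounds, conditions, conclusion) belongs to kappa iff some grounding rule of kappa
has an application with ground premisses [grounds], condition premisses [conditions]
and conclusion [conclusion].\<close>

type_synonym gcalc = "(form list \<times> form list \<times> form) set"

text \<open>Hyp A: a hypothesis occurrence of A.
  App gs cs B: an application of a grounding rule with ground premisses derived by gs,
  condition premisses derived by cs, and conclusion B.\<close>

datatype dtree = Hyp form | App "dtree list" "dtree list" form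

fun root :: "dtree \<Rightarrow> form" where
  "root (Hyp A) = A"
| "root (App gs cs B) = B"

fun children :: "dtree \<Rightarrow> dtree list" where
  "children (Hyp A) = []"
| "children (App gs cs B) = gs @ cs"

fun ngrounds :: "dtree \<Rightarrow> nat" where
  "ngrounds (Hyp A) = 0"
| "ngrounds (App gs cs B) = length gs"

fun valid :: "gcalc \<Rightarrow> dtree \<Rightarrow> bool" where
  "valid \<kappa> (Hyp A) = True"
| "valid \<kappa> (App gs cs B) =
     ((map root gs, map root cs, B) \<in> \<kappa> \<and> (\<forall>g\<in>set gs. valid \<kappa> g) \<and> (\<forall>c\<in>set cs. valid \<kappa> c))"

fun hyps :: "dtree \<Rightarrow> form set" where
  "hyps (Hyp A) = {A}"
| "hyps (App gs cs B) = (\<Union>t\<in>set (gs @ cs). hyps t)"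

text \<open>Formula occurrences are addressed by positions (paths from the root): the root is [],
  and i # p addresses position p inside the i-th premiss (grounds first, then conditions).\<close>

fun subtree_at :: "dtree \<Rightarrow> nat list \<Rightarrow> dtree option" where
  "subtree_at t [] = Some t"
| "subtree_at t (i # p) =
     (if i < length (children t) then subtree_at (children t ! i) p else None)"

definition positions :: "dtree \<Rightarrow> nat list set" where
  "positions t = {p. subtree_at t p \<noteq> None}"

definition leafpos :: "dtree \<Rightarrow> nat list set" where
  "leafpos t = {p \<in> positions t. children (the (subtree_at t p)) = []}"

definition fat :: "dtree \<Rightarrow> nat list \<Rightarrow> form" where
  "fat t p = root (the (subtree_at t p))"

definition path_to :: "nat list \<Rightarrow> nat list set" where
  "path_to l = {take k l | k. k \<le> length l}"

definition is_bar :: "dtree \<Rightarrow> nat list set \<Rightarrow> bool" where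
  "is_bar t S \<longleftrightarrow> S \<subseteq> positions t \<and> [] \<notin> S \<and>
     (\<forall>l\<in>leafpos t. card (S \<inter> path_to l) = 1)"

text \<open>An occurrence counts as a ground (of the conclusion) if every step on the path from
  the root to it passes through a ground position; otherwise (some step passes through a
  condition position) it counts as a condition.\<close>
definition is_ground_pos :: "dtree \<Rightarrow> nat list \<Rightarrow> bool" where
  "is_ground_pos t p \<longleftrightarrow> (\<forall>k < length p. p ! k < ngrounds (the (subtree_at t (take k p))))"

inductive deriv :: "gcalc \<Rightarrow> form set \<Rightarrow> form \<Rightarrow> bool" for \<kappa> H where
  hyp: "A \<in> H \<Longrightarrow> deriv \<kappa> H A"
| kappa: "(G, D, B) \<in> \<kappa> \<Longrightarrow> (\<forall>X\<in>set G. deriv \<kappa> H X) \<Longrightarrow> (\<forall>X\<in>set D. deriv \<kappa> H X)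
          \<Longrightarrow> deriv \<kappa> H B"
| immI: "(G, D, B) \<in> \<kappa> \<Longrightarrow> (\<forall>X\<in>set G. deriv \<kappa> H X) \<Longrightarrow> (\<forall>X\<in>set D. deriv \<kappa> H X)
          \<Longrightarrow> deriv \<kappa> H (GImm G D B)"
| immE_concl: "deriv \<kappa> H (GImm G D B) \<Longrightarrow> deriv \<kappa> H B"
| immE_ground: "deriv \<kappa> H (GImm G D B) \<Longrightarrow> X \<in> set G \<Longrightarrow> deriv \<kappa> H X"
| immE_cond: "deriv \<kappa> H (GImm G D B) \<Longrightarrow> X \<in> set D \<Longrightarrow> deriv \<kappa> H X"
| immE_bot: "deriv \<kappa> H (GImm G D B) \<Longrightarrow> (G, D, B) \<notin> \<kappa> \<Longrightarrow> deriv \<kappa> H Bot"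
| medI_imm: "deriv \<kappa> H (GImm G D A) \<Longrightarrow> deriv \<kappa> H (GMed G D A)"
| medI_ground: "deriv \<kappa> H (GMed G D A) \<Longrightarrow> deriv \<kappa> H (GMed (G1 @ A # G2) D1 B)
          \<Longrightarrow> deriv \<kappa> H (GMed (G1 @ G @ G2) (D @ D1) B)"
| medI_cond: "deriv \<kappa> H (GMed G D A) \<Longrightarrow> deriv \<kappa> H (GMed G1 (D1 @ A # D2) B)
          \<Longrightarrow> deriv \<kappa> H (GMed G1 (D1 @ G @ D @ D2) B)"
| medE_concl: "deriv \<kappa> H (GMed G D B) \<Longrightarrow> deriv \<kappa> H B"
| medE_ground: "deriv \<kappa> H (GMed G D B) \<Longrightarrow> X \<in> set G \<Longrightarrow> deriv \<kappa> H X"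
| medE_cond: "deriv \<kappa> H (GMed G D B) \<Longrightarrow> X \<in> set D \<Longrightarrow> deriv \<kappa> H X"

definition consistent :: "gcalc \<Rightarrow> form set \<Rightarrow> bool" where
  "consistent \<kappa> H \<longleftrightarrow> \<not> deriv \<kappa> H Bot"

definition grounding_derivation :: "gcalc \<Rightarrow> dtree \<Rightarrow> form \<Rightarrow> bool" where
  "grounding_derivation \<kappa> t A \<longleftrightarrow>
     valid \<kappa> t \<and> root t = A \<and> (\<exists>gs cs B. t = App gs cs B) \<and> consistent \<kappa> (hyps t)"

end

theory Submission
  imports Defs
begin

lemma valid_deriv: "valid \<kappa> t \<Longrightarrow> hyps t \<subseteq> H \<Longrightarrow> deriv \<kappa> H (root t)"
proof (induction t)
  case (Hyp A) then show ?case by (auto intro: deriv.hyp)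
next
  case (App gs cs B)
  then show ?case
    apply (intro deriv.kappa[of "map root gs" "map root cs"])
    apply simp
     apply (simp, metis SUP_le_iff valid.simps(2))
    apply (simp, metis SUP_le_iff valid.simps(2))
    done
qed

lemma all_less_Suc_split: "(\<forall>k<Suc n. P k) = (P 0 \<and> (\<forall>k<n. P (Suc k)))"
  using less_Suc_eq_0_disj by auto

lemma ground_Cons:
  assumes "i < length (gs @ cs)"
  shows "is_ground_pos (App gs cs B) (i # p) = (i < length gs \<and> is_ground_pos ((gs @ cs) ! i) p)"
  using assms unfolding is_ground_pos_def
  by (simp add: all_less_Suc_split) 

lemma ground_Nil: "is_ground_pos t []"
  by (simp add: is_ground_pos_def)

lemma fat_Cons:
  assumes "i < length (gs @ cs)"
  shows "fat (App gs cs B) (i # p) = fat ((gs @ cs) ! i) p"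
  using assms by (simp add: fat_def)

lemma fat_single:
  assumes "i < length (gs @ cs)"
  shows "fat (App gs cs B) [i] = root ((gs @ cs) ! i)"
  using assms by (simp add: fat_def)

lemma pos_Cons:
  "i # p \<in> positions (App gs cs B) \<longleftrightarrow> i < length (gs @ cs) \<and> p \<in> positions ((gs @ cs) ! i)"
  by (simp add: positions_def)

lemma leaf_Cons:
  "i < length (gs @ cs) \<Longrightarrow> l \<in> leafpos ((gs @ cs) ! i) \<Longrightarrow> i # l \<in> leafpos (App gs cs B)"
  by (simp add: leafpos_def positions_def)

lemma path_to_Cons: "path_to (i # l) = insert [] (Cons i ` path_to l)"
proof -
  have "path_to (i # l) = {take k (i # l) |k. k \<le> Suc (length l)}" by (simp add: path_to_def)
  also have "\<dots> = insert [] {i # take k l |k. k \<le> length l}"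
  proof (rule set_eqI, rule iffI)
    fix x assume "x \<in> {take k (i # l) |k. k \<le> Suc (length l)}"
    then obtain k where k: "k \<le> Suc (length l)" "x = take k (i # l)" by blast
    show "x \<in> insert [] {i # take k l |k. k \<le> length l}"
    proof (cases k)
      case 0 then show ?thesis using k by simp
    next
      case (Suc k') then show ?thesis using k by auto
    qed
  next
    fix x assume "x \<in> insert [] {i # take k l |k. k \<le> length l}"
    then consider "x = []" | k where "k \<le> length l" "x = i # take k l" by blast
    then show "x \<in> {take k (i # l) |k. k \<le> Suc (length l)}"
    proof cases
      case 1 then show ?thesis by (intro CollectI exI[of _ 0]) simp
    next
      case 2 then show ?thesis by (intro CollectI exI[of _ "Suc k"]) simp
    qed
  qed
  also have "\<dots> = insert [] (Cons i ` path_to l)" by (auto simp: path_to_def)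
  finally show ?thesis .
qed

lemma path_to_Nil: "path_to [] = {[]}" by (simp add: path_to_def)
lemma Nil_in_path_to: "[] \<in> path_to l" by (force simp: path_to_def)

lemma leaf_ext: "p \<in> positions t \<Longrightarrow> \<exists>l\<in>leafpos t. p \<in> path_to l"
proof (induction t arbitrary: p)
  case (Hyp A)
  then have "p = []" by (cases p) (auto simp: positions_def)
  then show ?case by (intro bexI[of _ "[]"]) (auto simp: leafpos_def positions_def path_to_Nil)
next
  case (App gs cs B)
  show ?case
  proof (cases p)
    case Nil
    show ?thesis
    proof (cases "gs @ cs = []")
      case True
      then show ?thesis using Nil by (intro bexI[of _ "[]"]) (auto simp: leafpos_def positions_def path_to_Nil)
    next
      case False
      then have c: "0 < length (gs @ cs)" by simp
      then have "(gs @ cs) ! 0 \<in> set gs \<union> set cs" by (metis nth_mem set_append)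
      moreover have "[] \<in> positions ((gs @ cs) ! 0)" by (simp add: positions_def)
      ultimately obtain l where "l \<in> leafpos ((gs @ cs) ! 0)" using App.IH by blast
      then show ?thesis using leaf_Cons[OF c] Nil Nil_in_path_to by blast
    qed
  next
    case (Cons i p')
    then have c: "i < length (gs @ cs)" and p': "p' \<in> positions ((gs @ cs) ! i)"
      using App.prems pos_Cons by auto
    then have "(gs @ cs) ! i \<in> set gs \<union> set cs" by (metis nth_mem set_append)
    then obtain l where "l \<in> leafpos ((gs @ cs) ! i)" "p' \<in> path_to l" using App.IH p' by blast
    then show ?thesis using leaf_Cons[OF c] Cons path_to_Cons by blast
  qed
qed

lemma distinct_concat_map:
  "distinct xs \<Longrightarrow> (\<forall>x\<in>set xs. distinct (g x)) \<Longrightarrow>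
   (\<forall>x\<in>set xs. \<forall>y\<in>set xs. x \<noteq> y \<longrightarrow> set (g x) \<inter> set (g y) = {}) \<Longrightarrow> distinct (concat (map g xs))"
  by (induction xs) auto

lemma gexp:
  assumes "deriv \<kappa> H (GMed (map f (G1 @ qs @ G2)) (map f D) B)"
    and "\<forall>q\<in>set qs. (ge q = [q] \<and> de q = []) \<or> deriv \<kappa> H (GMed (map f (ge q)) (map f (de q)) (f q))"
  shows "deriv \<kappa> H (GMed (map f (G1 @ concat (map ge qs) @ G2)) (map f (concat (map de (rev qs)) @ D)) B)"
  using assms
proof (induction qs arbitrary: G1 D)
  case Nil then show ?case by simp
next
  case (Cons q qs)
  have "deriv \<kappa> H (GMed (map f ((G1 @ ge q) @ qs @ G2)) (map f (de q @ D)) B)"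
  proof (cases "ge q = [q] \<and> de q = []")
    case True then show ?thesis using Cons.prems(1) by simp
  next
    case False
    then have d: "deriv \<kappa> H (GMed (map f (ge q)) (map f (de q)) (f q))" using Cons.prems(2) by auto
    have "deriv \<kappa> H (GMed (map f G1 @ f q # map f (qs @ G2)) (map f D) B)"
      using Cons.prems(1) by simp
    from deriv.medI_ground[OF d this] show ?thesis by simp
  qed
  from Cons.IH[OF this] Cons.prems(2) show ?case by simp
qed

lemma cexp:
  assumes "deriv \<kappa> H (GMed G (map f (D1 @ qs @ D2)) B)"
    and "\<forall>q\<in>set qs. ce q = [q] \<or> (\<exists>X Y. ce q = X @ Y \<and> deriv \<kappa> H (GMed (map f X) (map f Y) (f q)))"
  shows "deriv \<kappa> H (GMed G (map f (D1 @ concat (map ce qs) @ D2)) B)"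
  using assms
proof (induction qs arbitrary: D1)
  case Nil then show ?case by simp
next
  case (Cons q qs)
  have "deriv \<kappa> H (GMed G (map f ((D1 @ ce q) @ qs @ D2)) B)"
  proof (cases "ce q = [q]")
    case True then show ?thesis using Cons.prems(1) by simp
  next
    case False
    then obtain X Y where e: "ce q = X @ Y" and d: "deriv \<kappa> H (GMed (map f X) (map f Y) (f q))"
      using Cons.prems(2) by auto
    have "deriv \<kappa> H (GMed G (map f D1 @ f q # map f (qs @ D2)) B)"
      using Cons.prems(1) by simp
    from deriv.medI_cond[OF d this] show ?thesis using e by simp
  qed
  from Cons.IH[OF this] Cons.prems(2) show ?case by simp
qed


lemma main:
  "valid \<kappa> t \<Longrightarrow> hyps t \<subseteq> H \<Longrightarrow> is_bar t S \<Longrightarrow>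
   \<exists>gl cl. distinct gl \<and> set gl = {p \<in> S. is_ground_pos t p}
         \<and> distinct cl \<and> set cl = {p \<in> S. \<not> is_ground_pos t p}
         \<and> deriv \<kappa> H (GMed (map (fat t) gl) (map (fat t) cl) (root t))"
proof (induction t arbitrary: S)
  case (Hyp A)
  have "[] \<in> leafpos (Hyp A)" by (simp add: leafpos_def positions_def)
  then have "card (S \<inter> {[]}) = 1" using Hyp.prems(3) by (auto simp: is_bar_def path_to_Nil)
  moreover have "[] \<notin> S" using Hyp.prems(3) by (auto simp: is_bar_def)
  ultimately show ?case by simp
next
  case (App gs cs B)
  define t where "t = App gs cs B"
  define ch where "ch = gs @ cs"
  define n where "n = length ch"
  define ng where "ng = length gs"
  have ngn: "ng \<le> n" by (simp add: ng_def n_def ch_def)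
  have Sp: "S \<subseteq> positions t" and S0: "[] \<notin> S" and Sl: "\<forall>l\<in>leafpos t. card (S \<inter> path_to l) = 1"
    using App.prems(3) by (auto simp: is_bar_def t_def)
  have F1: "q = hd q # tl q \<and> hd q < n \<and> tl q \<in> positions (ch ! hd q)" if qS: "q \<in> S" for q
  proof -
    obtain i p where q: "q = i # p" using S0 qS by (cases q) auto
    then show ?thesis using Sp qS pos_Cons[of i p gs cs B] by (auto simp: t_def ch_def n_def)
  qed
  have F2: "p = []" if "[i] \<in> S" "i # p \<in> S" for i p
  proof -
    have i: "i < n" and p: "p \<in> positions (ch ! i)" using F1[OF that(2)] by auto
    obtain l where l: "l \<in> leafpos (ch ! i)" "p \<in> path_to l" using leaf_ext[OF p] by blast
    have "i # l \<in> leafpos t" using leaf_Cons[of i gs cs l B] l i by (simp add: t_def ch_def n_def)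
    then have c: "card (S \<inter> path_to (i # l)) = 1" using Sl by blast
    have "[i] \<in> path_to (i # l)" "i # p \<in> path_to (i # l)"
      using l Nil_in_path_to[of l] by (auto simp: path_to_Cons)
    then have "[i] \<in> S \<inter> path_to (i # l)" "i # p \<in> S \<inter> path_to (i # l)" using that by auto
    with c have "[i] = i # p" by (metis card_1_singletonE singletonD)
    then show ?thesis by simp
  qed
  have F3: "is_bar (ch ! i) {p. i # p \<in> S}" if i: "i < n" and ni: "[i] \<notin> S" for i
  proof -
    have "{p. i # p \<in> S} \<subseteq> positions (ch ! i)" using F1 by fastforce
    moreover have "[] \<notin> {p. i # p \<in> S}" using ni by simp
    moreover have "card ({p. i # p \<in> S} \<inter> path_to l) = 1" if l: "l \<in> leafpos (ch ! i)" for l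
    proof -
      have "i # l \<in> leafpos t" using leaf_Cons[of i gs cs l B] l i by (simp add: t_def ch_def n_def)
      then have c: "card (S \<inter> path_to (i # l)) = 1" using Sl by blast
      have "S \<inter> path_to (i # l) = Cons i ` ({p. i # p \<in> S} \<inter> path_to l)"
        using S0 by (auto simp: path_to_Cons)
      then have "card (S \<inter> path_to (i # l)) = card ({p. i # p \<in> S} \<inter> path_to l)"
        by (simp add: card_image)
      then show ?thesis using c by simp
    qed
    ultimately show ?thesis by (simp add: is_bar_def)
  qed
  have chv: "valid \<kappa> (ch ! i) \<and> hyps (ch ! i) \<subseteq> H \<and> (ch ! i \<in> set gs \<or> ch ! i \<in> set cs)" if "i < n" for i
  proof -
    have m: "ch ! i \<in> set gs \<union> set cs" proof -
      have "ch ! i \<in> set ch" using that by (simp add: n_def)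
      then show ?thesis by (simp add: ch_def)
    qed
    then show ?thesis using App.prems(1,2) by auto
  qed
  define P where "P i gl cl \<longleftrightarrow> distinct gl \<and> set gl = {p \<in> {p. i # p \<in> S}. is_ground_pos (ch ! i) p}
         \<and> distinct cl \<and> set cl = {p \<in> {p. i # p \<in> S}. \<not> is_ground_pos (ch ! i) p}
         \<and> deriv \<kappa> H (GMed (map (fat (ch ! i)) gl) (map (fat (ch ! i)) cl) (root (ch ! i)))" for i gl cl
  have "\<forall>i. \<exists>e. i < n \<and> [i] \<notin> S \<longrightarrow> P i (fst e) (snd e)"
  proof
    fix i
    show "\<exists>e. i < n \<and> [i] \<notin> S \<longrightarrow> P i (fst e) (snd e)"
    proof (cases "i < n \<and> [i] \<notin> S")
      case True
      then have b: "is_bar (ch ! i) {p. i # p \<in> S}" using F3 by blast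
      have "\<exists>gl cl. P i gl cl"
        using chv[of i] True App.IH(1)[OF _ _ _ b] App.IH(2)[OF _ _ _ b] unfolding P_def by blast
      then show ?thesis by auto
    qed auto
  qed
  then obtain E where E: "\<And>i. i < n \<Longrightarrow> [i] \<notin> S \<Longrightarrow> P i (fst (E i)) (snd (E i))"
    by metis
  define f where "f = fat t"
  have fC: "map f (map (Cons i) xs) = map (fat (ch ! i)) xs" if "i < n" for i xs
    using that by (simp add: f_def t_def fat_Cons ch_def n_def)
  have fC2: "f \<circ> (#) i = fat (ch ! i)" if "i < n" for i
    using that by (simp add: f_def t_def fat_Cons ch_def n_def fun_eq_iff)
  have f1: "f [i] = root (ch ! i)" if "i < n" for i
    using that by (simp add: f_def t_def fat_single ch_def n_def)
  define ge where "ge q = (if q \<in> S then [q] else map (Cons (hd q)) (fst (E (hd q))))" for q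
  define de where "de q = (if q \<in> S then [] else map (Cons (hd q)) (snd (E (hd q))))" for q
  define ce where "ce q = (if q \<in> S then [q] else map (Cons (hd q)) (fst (E (hd q)) @ snd (E (hd q))))" for q
  define qg where "qg = map (\<lambda>i. [i]) [0..<ng]"
  define qc where "qc = map (\<lambda>i. [i]) [ng..<n]"
  have val: "(map root gs, map root cs, B) \<in> \<kappa>" "\<forall>X\<in>set gs. valid \<kappa> X" "\<forall>X\<in>set cs. valid \<kappa> X"
    using App.prems(1) by auto
  have hy: "\<forall>X\<in>set gs. hyps X \<subseteq> H" "\<forall>X\<in>set cs. hyps X \<subseteq> H" using App.prems(2) by auto
  have d0: "deriv \<kappa> H (GImm (map root gs) (map root cs) B)"
    using val hy by (intro deriv.immI) (simp_all add: valid_deriv)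
  have eqg: "map f qg = map root gs"
    by (rule nth_equalityI) (auto simp: qg_def f1 ng_def n_def ch_def nth_append)
  have eqc: "map f qc = map root cs"
    by (rule nth_equalityI) (auto simp: qc_def f1 ng_def n_def ch_def nth_append)
  have d1: "deriv \<kappa> H (GMed (map f ([] @ qg @ [])) (map f qc) B)"
    using deriv.medI_imm[OF d0] eqg eqc by simp
  have gcond: "\<forall>q\<in>set qg. (ge q = [q] \<and> de q = []) \<or> deriv \<kappa> H (GMed (map f (ge q)) (map f (de q)) (f q))"
  proof
    fix q assume "q \<in> set qg"
    then obtain i where i: "q = [i]" "i < ng" by (auto simp: qg_def)
    show "(ge q = [q] \<and> de q = []) \<or> deriv \<kappa> H (GMed (map f (ge q)) (map f (de q)) (f q))"
    proof (cases "q \<in> S")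
      case True then show ?thesis by (simp add: ge_def de_def)
    next
      case False
      have "i < n" using i ngn by simp
      with E[of i] False i show ?thesis by (simp add: ge_def de_def P_def fC2 f1)
    qed
  qed
  have d2: "deriv \<kappa> H (GMed (map f ([] @ concat (map ge qg) @ [])) (map f (concat (map de (rev qg)) @ qc)) B)"
    by (rule gexp[OF d1 gcond])
  have ccond: "\<forall>q\<in>set qc. ce q = [q] \<or> (\<exists>X Y. ce q = X @ Y \<and> deriv \<kappa> H (GMed (map f X) (map f Y) (f q)))"
  proof
    fix q assume "q \<in> set qc"
    then obtain i where i: "q = [i]" "i < n" by (auto simp: qc_def)
    show "ce q = [q] \<or> (\<exists>X Y. ce q = X @ Y \<and> deriv \<kappa> H (GMed (map f X) (map f Y) (f q)))"
    proof (cases "q \<in> S")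
      case True then show ?thesis by (simp add: ce_def)
    next
      case False
      with E[of i] i show ?thesis
        by (intro disjI2 exI[of _ "map (Cons i) (fst (E i))"] exI[of _ "map (Cons i) (snd (E i))"])
           (simp add: ce_def P_def fC2 f1)
    qed
  qed
  have d2': "deriv \<kappa> H (GMed (map f (concat (map ge qg))) (map f (concat (map de (rev qg)) @ qc @ [])) B)"
    using d2 by simp
  have d3: "deriv \<kappa> H (GMed (map f (concat (map ge qg))) (map f (concat (map de (rev qg)) @ concat (map ce qc) @ [])) B)"
    by (rule cexp[OF d2' ccond])
  have gtC: "is_ground_pos t (i # p) = (i < ng \<and> is_ground_pos (ch ! i) p)" if "i < n" for i p
    using ground_Cons[where i=i and p=p and gs=gs and cs=cs and B=B] that unfolding t_def ch_def n_def ng_def .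
  have gt1: "is_ground_pos t [i] = (i < ng)" if "i < n" for i
    using gtC[OF that, of "[]"] ground_Nil by simp
  have hdS: "q = [i]" if "q \<in> S" "hd q = i" "[i] \<in> S" for q i
  proof -
    have "q = i # tl q" using F1[OF that(1)] that(2) by simp
    moreover have "tl q = []" using F2[of i "tl q"] that calculation by simp
    ultimately show ?thesis by simp
  qed
  have SG: "set (ge [i]) = {q \<in> S. is_ground_pos t q \<and> hd q = i}" if i: "i < ng" for i
  proof (cases "[i] \<in> S")
    case True
    have "{q \<in> S. is_ground_pos t q \<and> hd q = i} = {[i]}"
    proof
      show "{[i]} \<subseteq> {q \<in> S. is_ground_pos t q \<and> hd q = i}"
        using True i ngn gt1[of i] by simp
      show "{q \<in> S. is_ground_pos t q \<and> hd q = i} \<subseteq> {[i]}"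
        using hdS True by blast
    qed
    then show ?thesis using True by (simp add: ge_def)
  next
    case False
    have in_: "i < n" using i ngn by simp
    have "set (ge [i]) = Cons i ` {p. i # p \<in> S \<and> is_ground_pos (ch ! i) p}"
      using E[OF in_ False] False by (simp add: ge_def P_def)
    also have "\<dots> = {q \<in> S. is_ground_pos t q \<and> hd q = i}"
    proof
      show "Cons i ` {p. i # p \<in> S \<and> is_ground_pos (ch ! i) p} \<subseteq> {q \<in> S. is_ground_pos t q \<and> hd q = i}"
        using i in_ gtC by auto
      show "{q \<in> S. is_ground_pos t q \<and> hd q = i} \<subseteq> Cons i ` {p. i # p \<in> S \<and> is_ground_pos (ch ! i) p}"
      proof
        fix q assume q: "q \<in> {q \<in> S. is_ground_pos t q \<and> hd q = i}"
        then have qq: "q = i # tl q" using F1 by force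
        then have "is_ground_pos (ch ! i) (tl q)" using q in_ gtC[of i "tl q"] by simp
        then show "q \<in> Cons i ` {p. i # p \<in> S \<and> is_ground_pos (ch ! i) p}"
          using q qq by (metis (mono_tags, lifting) image_eqI mem_Collect_eq)
      qed
    qed
    finally show ?thesis .
  qed
  have SD: "set (de [i]) = {q \<in> S. \<not> is_ground_pos t q \<and> hd q = i}" if i: "i < ng" for i
  proof (cases "[i] \<in> S")
    case True
    have "{q \<in> S. \<not> is_ground_pos t q \<and> hd q = i} = {}"
    proof -
      have "is_ground_pos t [i]"
        using True i ngn gt1[of i] by simp
      then show ?thesis using hdS[OF _ _ True] by auto
    qed
    then show ?thesis using True by (simp add: de_def)
  next
    case False
    have in_: "i < n" using i ngn by simp
    have "set (de [i]) = Cons i ` {p. i # p \<in> S \<and> \<not> is_ground_pos (ch ! i) p}"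
      using E[OF in_ False] False by (simp add: de_def P_def)
    also have "\<dots> = {q \<in> S. \<not> is_ground_pos t q \<and> hd q = i}"
    proof
      show "Cons i ` {p. i # p \<in> S \<and> \<not> is_ground_pos (ch ! i) p} \<subseteq> {q \<in> S. \<not> is_ground_pos t q \<and> hd q = i}"
        using i in_ gtC by auto
      show "{q \<in> S. \<not> is_ground_pos t q \<and> hd q = i} \<subseteq> Cons i ` {p. i # p \<in> S \<and> \<not> is_ground_pos (ch ! i) p}"
      proof
        fix q assume q: "q \<in> {q \<in> S. \<not> is_ground_pos t q \<and> hd q = i}"
        then have qq: "q = i # tl q" using F1 by force
        then have "\<not> is_ground_pos (ch ! i) (tl q)" using q in_ i gtC[of i "tl q"] by simp
        then show "q \<in> Cons i ` {p. i # p \<in> S \<and> \<not> is_ground_pos (ch ! i) p}"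
          using q qq by (metis (mono_tags, lifting) image_eqI mem_Collect_eq)
      qed
    qed
    finally show ?thesis .
  qed
  have ngr: "\<not> is_ground_pos t q" if "q \<in> S" "ng \<le> hd q" for q
    using that F1[OF that(1)] gtC[of "hd q" "tl q"] by auto
  have SC: "set (ce [i]) = {q \<in> S. hd q = i}" if i: "ng \<le> i" "i < n" for i
  proof (cases "[i] \<in> S")
    case True
    have "{q \<in> S. hd q = i} = {[i]}"
      using hdS True by auto
    then show ?thesis using True by (simp add: ce_def)
  next
    case False
    have "set (ce [i]) = Cons i ` {p. i # p \<in> S}"
      using E[OF i(2) False] False by (auto simp: ce_def P_def)
    also have "\<dots> = {q \<in> S. hd q = i}"
    proof
      show "Cons i ` {p. i # p \<in> S} \<subseteq> {q \<in> S. hd q = i}" by auto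
      show "{q \<in> S. hd q = i} \<subseteq> Cons i ` {p. i # p \<in> S}"
      proof
        fix q assume q: "q \<in> {q \<in> S. hd q = i}"
        then have qq: "q = i # tl q" using F1 by force
        then show "q \<in> Cons i ` {p. i # p \<in> S}"
          using q by (metis (mono_tags, lifting) image_eqI mem_Collect_eq)
      qed
    qed
    finally show ?thesis .
  qed
  have dge: "distinct (ge [i])" if "i < ng" for i
  proof (cases "[i] \<in> S")
    case False
    have in_: "i < n" using that ngn by simp
    then show ?thesis using E[OF in_ False] False by (simp add: ge_def P_def distinct_map)
  qed (simp add: ge_def)
  have dde: "distinct (de [i])" if "i < ng" for i
  proof (cases "[i] \<in> S")
    case False
    have in_: "i < n" using that ngn by simp
    then show ?thesis using E[OF in_ False] False by (simp add: de_def P_def distinct_map)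
  qed (simp add: de_def)
  have dce: "distinct (ce [i])" if "ng \<le> i" "i < n" for i
  proof (cases "[i] \<in> S")
    case False
    then have P: "P i (fst (E i)) (snd (E i))" using E that by blast
    have "set (fst (E i)) \<inter> set (snd (E i)) = {}" using P by (auto simp: P_def)
    then show ?thesis using P False by (simp add: ce_def P_def distinct_map) blast
  qed (simp add: ce_def)
  define gl where "gl = concat (map ge qg)"
  define cl where "cl = concat (map de (rev qg)) @ concat (map ce qc)"
  have "distinct gl"
    unfolding gl_def qg_def map_map
    by (rule distinct_concat_map) (auto simp: dge SG)
  moreover have "set gl = {p \<in> S. is_ground_pos t p}"
  proof -
    have "set gl = (\<Union>i\<in>{0..<ng}. set (ge [i]))" by (simp add: gl_def qg_def)
    also have "\<dots> = (\<Union>i\<in>{0..<ng}. {q \<in> S. is_ground_pos t q \<and> hd q = i})" using SG by simp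
    also have "\<dots> = {p \<in> S. is_ground_pos t p}"
    proof -
      have "hd q < ng" if "q \<in> S" "is_ground_pos t q" for q
        using ngr that by (meson not_le)
      then show ?thesis by auto
    qed
    finally show ?thesis .
  qed
  moreover have "distinct cl"
  proof -
    have a: "distinct (concat (map de (rev qg)))"
      unfolding qg_def rev_map map_map
      by (rule distinct_concat_map) (auto simp: dde SD)
    have b: "distinct (concat (map ce qc))"
      unfolding qc_def map_map
      by (rule distinct_concat_map) (auto simp: dce SC)
    have c: "set (concat (map de (rev qg))) \<inter> set (concat (map ce qc)) = {}"
      using SD SC by (auto simp: qg_def qc_def)
    show ?thesis using a b c by (simp add: cl_def)
  qed
  moreover have "set cl = {p \<in> S. \<not> is_ground_pos t p}"
  proof -
    have "set cl = (\<Union>i\<in>{0..<ng}. set (de [i])) \<union> (\<Union>i\<in>{ng..<n}. set (ce [i]))"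
      by (simp add: cl_def qg_def qc_def)
    also have "\<dots> = (\<Union>i\<in>{0..<ng}. {q \<in> S. \<not> is_ground_pos t q \<and> hd q = i}) \<union> (\<Union>i\<in>{ng..<n}. {q \<in> S. hd q = i})"
      using SD SC by simp
    also have "\<dots> = {p \<in> S. \<not> is_ground_pos t p}"
    proof
      show "(\<Union>i\<in>{0..<ng}. {q \<in> S. \<not> is_ground_pos t q \<and> hd q = i}) \<union> (\<Union>i\<in>{ng..<n}. {q \<in> S. hd q = i}) \<subseteq> {p \<in> S. \<not> is_ground_pos t p}"
        using ngr by auto
      show "{p \<in> S. \<not> is_ground_pos t p} \<subseteq> (\<Union>i\<in>{0..<ng}. {q \<in> S. \<not> is_ground_pos t q \<and> hd q = i}) \<union> (\<Union>i\<in>{ng..<n}. {q \<in> S. hd q = i})"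
      proof
        fix q assume q: "q \<in> {p \<in> S. \<not> is_ground_pos t p}"
        then have "hd q < n" using F1 by blast
        then show "q \<in> (\<Union>i\<in>{0..<ng}. {q \<in> S. \<not> is_ground_pos t q \<and> hd q = i}) \<union> (\<Union>i\<in>{ng..<n}. {q \<in> S. hd q = i})"
          using q by (cases "hd q < ng") auto
      qed
    qed
    finally show ?thesis .
  qed
  moreover have "deriv \<kappa> H (GMed (map (fat t) gl) (map (fat t) cl) (root t))"
    using d3 by (simp add: gl_def cl_def f_def t_def)
  ultimately show ?case unfolding t_def by blast
qed

theorem mainTheorem1:
  fixes \<kappa> :: gcalc and \<delta> :: dtree and A :: form and S :: "nat list set"
  assumes "grounding_derivation \<kappa> \<delta> A"
    and "is_bar \<delta> S"
  shows "\<exists>gl cl. distinct gl \<and> set gl = {p \<in> S. is_ground_pos \<delta> p}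
              \<and> distinct cl \<and> set cl = {p \<in> S. \<not> is_ground_pos \<delta> p}
              \<and> deriv \<kappa> (hyps \<delta>) (GMed (map (fat \<delta>) gl) (map (fat \<delta>) cl) A)"
proof -
  have v: "valid \<kappa> \<delta>" and r: "root \<delta> = A" using assms(1) by (auto simp: grounding_derivation_def)
  show ?thesis using main[OF v _ assms(2), of "hyps \<delta>"] r by simp
qed

end
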